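(* (i) Let $\boldsymbol{\pi}\in\mathbb{R}^n$ be a probability vector with $\boldsymbol{\pi}>0$ entrywise, and let $\mathcal{S}$ be an irreducible pattern. Then there exists a reversible stochastic matrix $X\in\mathbb{R}^{n\times n}(\mathcal{S})$ with stationary distribution $\boldsymbol{\pi}$ (in particular $\pi_iX_{ij}=\pi_jX_{ji}$ for all $i,j$). (ii) Let $\mathcal{P}$ and $\mathcal{S}$ be patterns, and let $P\in\mathbb{R}^{n\times n}(\mathcal{P})$ be a reversible stochastic matrix with stationary distribution $\boldsymbol{\pi}$. Then the set \[ \mathcal{F}=\{X\in\mathbb{R}^{n\times n}(\mathcal{S}\cup\mathcal{P}) : X_{ij}=P_{ij}\text{ for }\{i,j\}\in\mathcal{P}\setminus\mathcal{S},\ X\mathbf{1}=\mathbf{1},\ D_{\boldsymbol{\pi}}X=X^\top D_{\boldsymbol{\pi}},\ X\ge 0\} \] is not empty.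
   Context: A stochastic matrix is a nonnegative real matrix $P$ with $P\mathbf{1}=\mathbf{1}$, where $\mathbf{1}$ is the all-ones vector; $X\ge 0$ means entrywise nonnegativity. A stationary distribution of $P$ is a probability vector $\boldsymbol{\pi}$ with $\boldsymbol{\pi}^\top P=\boldsymbol{\pi}^\top$. A stochastic matrix is reversible if it is irreducible and its (unique, positive) stationary distribution $\boldsymbol{\pi}$ satisfies $\pi_iP_{ij}=\pi_jP_{ji}$ for all $i,j$, i.e. $D_{\boldsymbol{\pi}}P=P^\top D_{\boldsymbol{\pi}}$, with $D_{\boldsymbol{\pi}}$ the diagonal matrix with diagonal $\boldsymbol{\pi}$. A pattern $\mathcal{S}$ is a set of unordered pairs $\{i,j\}$, $1\le i,j\le n$, containing $\{i,i\}$ for all $i$. $\mathbb{R}^{n\times n}(\mathcal{S})$ is the set of real $n\times n$ matrices $\Delta$ with $\Delta_{ij}=\Delta_{ji}=0$ whenever $\{i,j\}\notin\mathcal{S}$. $\mathbb{R}^{n\times n}_{\mathrm{exact}}(\mathcal{S})$ is the set of real $n\times n$ matrices $\Delta$ such that ($\Delta_{ij}\neq0$ and $\Delta_{ji}\ne 0$) if and only if $\{i,j\}\in\mathcal{S}$. A pattern $\mathcal{S}$ is irreducible if every matrix in $\mathbb{R}^{n\times n}_{\mathrm{exact}}(\mathcal{S})$ is irreducible. *)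

theory Defs
  imports "HOL-Analysis.Analysis" "HOL-Library.Uprod"
begin

text \<open>n x n real matrices are rendered as real^'n^'n (index type 'n finite, n = CARD('n)).
  Patterns are sets of unordered pairs of indices.\<close>

definition stochastic :: "real^'n^'n \<Rightarrow> bool" where
  "stochastic P \<longleftrightarrow> (\<forall>i j. P$i$j \<ge> 0) \<and> P *v (vec 1) = vec 1"

definition prob_vector :: "real^'n \<Rightarrow> bool" where
  "prob_vector p \<longleftrightarrow> (\<forall>i. p$i \<ge> 0) \<and> (\<Sum>i\<in>UNIV. p$i) = 1"

definition stationary_dist :: "real^'n^'n \<Rightarrow> real^'n \<Rightarrow> bool" where
  "stationary_dist P p \<longleftrightarrow> prob_vector p \<and> p v* P = p"

definition irreducible_mat :: "real^'n^'n \<Rightarrow> bool" where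
  "irreducible_mat A \<longleftrightarrow> (\<forall>i j. (i, j) \<in> {(k, l). A$k$l \<noteq> 0}\<^sup>+)"

definition reversible :: "real^'n^'n \<Rightarrow> bool" where
  "reversible P \<longleftrightarrow> stochastic P \<and> irreducible_mat P \<and>
     (\<forall>p. stationary_dist P p \<longrightarrow> (\<forall>i j. p$i * P$i$j = p$j * P$j$i))"

definition pattern :: "('n::finite) uprod set \<Rightarrow> bool" where
  "pattern S \<longleftrightarrow> (\<forall>i. Upair i i \<in> S)"

definition pat_mats :: "('n::finite) uprod set \<Rightarrow> (real^'n^'n) set" where
  "pat_mats S = {D. \<forall>i j. Upair i j \<notin> S \<longrightarrow> D$i$j = 0 \<and> D$j$i = 0}"

definition exact_pat_mats :: "('n::finite) uprod set \<Rightarrow> (real^'n^'n) set" where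
  "exact_pat_mats S = {D. \<forall>i j. (D$i$j \<noteq> 0 \<and> D$j$i \<noteq> 0) \<longleftrightarrow> Upair i j \<in> S}"

definition irreducible_pattern :: "('n::finite) uprod set \<Rightarrow> bool" where
  "irreducible_pattern S \<longleftrightarrow> pattern S \<and> (\<forall>D \<in> exact_pat_mats S. irreducible_mat D)"

end

theory Submission
  imports Defs
begin

lemma upc: "Upair a b = Upair b a" by simp

lemma harm_unique:
  fixes X :: "real^'n^'n" and p q :: "real^'n"
  assumes st: "stochastic X" and irr: "irreducible_mat X"
    and pos: "\<forall>i. p$i > 0" and db: "\<forall>i j. p$i * X$i$j = p$j * X$j$i"
    and qs: "q v* X = q"
  shows "\<forall>i j. q$i * X$i$j = q$j * X$j$i"
proof -
  define h where "h i = q$i / p$i" for i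
  have qh: "q$i = p$i * h i" for i using pos[rule_format, of i] by (simp add: h_def)
  have nn: "X$i$j \<ge> 0" for i j using st by (simp add: stochastic_def)
  have row: "(\<Sum>i\<in>UNIV. X$j$i) = 1" for j
  proof -
    have "(X *v vec 1)$j = 1" using st by (simp add: stochastic_def)
    thus ?thesis by (simp add: matrix_vector_mult_def)
  qed
  have harm: "(\<Sum>i\<in>UNIV. X$j$i * h i) = h j" for j
  proof -
    have "q$j = (q v* X)$j" using qs by simp
    also have "\<dots> = (\<Sum>i\<in>UNIV. X$i$j * q$i)" by (simp add: vector_matrix_mult_def mult.commute)
    also have "\<dots> = (\<Sum>i\<in>UNIV. p$j * (X$j$i * h i))"
    proof (rule sum.cong)
      fix i
      have "X$i$j * q$i = (p$i * X$i$j) * h i" by (simp add: qh)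
      also have "\<dots> = (p$j * X$j$i) * h i" using db by simp
      finally show "X$i$j * q$i = p$j * (X$j$i * h i)" by simp
    qed simp
    also have "\<dots> = p$j * (\<Sum>i\<in>UNIV. X$j$i * h i)" by (simp add: sum_distrib_left)
    finally have "p$j * h j = p$j * (\<Sum>i\<in>UNIV. X$j$i * h i)" using qh[of j] by simp
    thus ?thesis using pos[rule_format, of j] by simp
  qed
  define M where "M = Max (range h)"
  have hle: "h i \<le> M" for i unfolding M_def by simp
  have "M \<in> range h" unfolding M_def by (rule Max_in) auto
  then obtain j0 where j0: "h j0 = M" by auto
  have stepM: "h i = M" if "h j = M" "X$j$i \<noteq> 0" for i j
  proof -
    have "(\<Sum>k\<in>UNIV. X$j$k * (M - h k)) = M * (\<Sum>k\<in>UNIV. X$j$k) - (\<Sum>k\<in>UNIV. X$j$k * h k)"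
      by (simp add: algebra_simps sum_subtractf sum_distrib_left)
    also have "\<dots> = 0" using row harm that by simp
    finally have "(\<Sum>k\<in>UNIV. X$j$k * (M - h k)) = 0" .
    moreover have "\<forall>k\<in>UNIV. X$j$k * (M - h k) \<ge> 0" using nn hle by simp
    ultimately have "X$j$i * (M - h i) = 0" using sum_nonneg_eq_0_iff[of UNIV "\<lambda>k. X$j$k * (M - h k)"] by simp
    thus ?thesis using that by simp
  qed
  have allM: "h i = M" for i
  proof -
    have "(j0, i) \<in> {(k, l). X$k$l \<noteq> 0}\<^sup>+" using irr by (simp add: irreducible_mat_def)
    thus ?thesis
    proof (induction rule: trancl_induct)
      case (base y) thus ?case using stepM j0 by auto
    next
      case (step y z) thus ?case using stepM by auto
    qed
  qed
  show ?thesis using db allM qh by (metis mult.assoc mult.commute)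
qed

theorem proposition2p3:
  shows "(\<forall>(p::real^'n) (S::'n uprod set).
            prob_vector p \<and> (\<forall>i. p$i > 0) \<and> irreducible_pattern S \<longrightarrow>
            (\<exists>X \<in> pat_mats S. reversible X \<and> stationary_dist X p
                \<and> (\<forall>i j. p$i * X$i$j = p$j * X$j$i)))
       \<and> (\<forall>(PP::'n uprod set) (S::'n uprod set) (P::real^'n^'n) (p::real^'n).
            pattern PP \<and> pattern S \<and> P \<in> pat_mats PP \<and> reversible P \<and> stationary_dist P p \<longrightarrow>
            {X \<in> pat_mats (S \<union> PP).
               (\<forall>i j. Upair i j \<in> PP - S \<longrightarrow> X$i$j = P$i$j)
               \<and> X *v (vec 1) = vec 1
               \<and> (\<forall>i j. p$i * X$i$j = p$j * X$j$i)
               \<and> (\<forall>i j. X$i$j \<ge> 0)} \<noteq> {})"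
proof (intro conjI allI impI)
  fix PP S :: "'n uprod set" and P :: "real^'n^'n" and p :: "real^'n"
  assume a: "pattern PP \<and> pattern S \<and> P \<in> pat_mats PP \<and> reversible P \<and> stationary_dist P p"
  have "P \<in> {X \<in> pat_mats (S \<union> PP).
               (\<forall>i j. Upair i j \<in> PP - S \<longrightarrow> X$i$j = P$i$j)
               \<and> X *v (vec 1) = vec 1
               \<and> (\<forall>i j. p$i * X$i$j = p$j * X$j$i)
               \<and> (\<forall>i j. X$i$j \<ge> 0)}"
    using a by (auto simp: pat_mats_def reversible_def stochastic_def)
  thus "{X \<in> pat_mats (S \<union> PP).
               (\<forall>i j. Upair i j \<in> PP - S \<longrightarrow> X$i$j = P$i$j)
               \<and> X *v (vec 1) = vec 1
               \<and> (\<forall>i j. p$i * X$i$j = p$j * X$j$i)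
               \<and> (\<forall>i j. X$i$j \<ge> 0)} \<noteq> {}" by blast
next
  fix p :: "real^'n" and S :: "'n uprod set"
  assume a: "prob_vector p \<and> (\<forall>i. p$i > 0) \<and> irreducible_pattern S"
  hence pos: "\<forall>i. p$i > 0" and pv: "prob_vector p" and ip: "irreducible_pattern S" by auto
  have pat: "pattern S" using ip by (simp add: irreducible_pattern_def)
  define A where "A i j = (if Upair i j \<in> S then p$j / 2 else 0)" for i j
  define X :: "real^'n^'n" where
    "X = (\<chi> i j. A i j + (if i = j then 1 - (\<Sum>k\<in>UNIV. A i k) else 0))"
  have Xij: "X$i$j = A i j + (if i = j then 1 - (\<Sum>k\<in>UNIV. A i k) else 0)" for i j
    by (simp add: X_def)
  have Ann: "A i j \<ge> 0" for i j using pos by (simp add: A_def less_imp_le)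
  have Asum: "(\<Sum>k\<in>UNIV. A i k) \<le> 1/2" for i
  proof -
    have "(\<Sum>k\<in>UNIV. A i k) \<le> (\<Sum>k\<in>UNIV. p$k / 2)"
      by (rule sum_mono) (use pos in \<open>auto simp: A_def less_imp_le\<close>)
    also have "\<dots> = 1/2" using pv by (simp add: prob_vector_def sum_divide_distrib[symmetric])
    finally show ?thesis .
  qed
  have diagpos: "X$i$i > 0" for i using Asum[of i] Ann[of i i] by (simp add: Xij)
  have nn: "X$i$j \<ge> 0" for i j
    using Ann[of i j] diagpos[of i] by (cases "i = j") (auto simp: Xij)
  have rows: "X *v vec 1 = vec 1"
  proof -
    have "(\<Sum>j\<in>UNIV. X$i$j) = 1" for i
    proof -
      have "(\<Sum>j\<in>UNIV. X$i$j) = (\<Sum>j\<in>UNIV. A i j) + (\<Sum>j\<in>UNIV. (if i = j then 1 - (\<Sum>k\<in>UNIV. A i k) else 0))"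
        by (simp add: Xij sum.distrib)
      also have "\<dots> = 1" by simp
      finally show ?thesis .
    qed
    thus ?thesis by (simp add: matrix_vector_mult_def vec_eq_iff)
  qed
  have st: "stochastic X" using nn rows by (simp add: stochastic_def)
  have db: "\<forall>i j. p$i * X$i$j = p$j * X$j$i"
  proof (intro allI)
    fix i j
    show "p$i * X$i$j = p$j * X$j$i"
    proof (cases "i = j")
      case True thus ?thesis by simp
    next
      case False
      have "Upair j i \<in> S \<longleftrightarrow> Upair i j \<in> S" by (metis upc)
      thus ?thesis using False by (auto simp: Xij A_def)
    qed
  qed
  have inS: "X \<in> pat_mats S"
  proof -
    have "X$i$j = 0 \<and> X$j$i = 0" if "Upair i j \<notin> S" for i j
    proof -
      have "i \<noteq> j" using that pat by (auto simp: pattern_def)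
      moreover have "Upair j i \<notin> S" using that by (metis upc)
      ultimately show ?thesis using that by (simp add: Xij A_def)
    qed
    thus ?thesis by (simp add: pat_mats_def)
  qed
  have ex: "X \<in> exact_pat_mats S"
  proof -
    have "(X$i$j \<noteq> 0 \<and> X$j$i \<noteq> 0) \<longleftrightarrow> Upair i j \<in> S" for i j
    proof (cases "i = j")
      case True thus ?thesis using diagpos[of i] pat by (auto simp: pattern_def)
    next
      case False
      have "Upair j i \<in> S \<longleftrightarrow> Upair i j \<in> S" by (metis upc)
      have "X$i$j \<noteq> 0 \<longleftrightarrow> Upair i j \<in> S"
        using False pos[rule_format, of j] by (simp add: Xij A_def)
      moreover have "X$j$i \<noteq> 0 \<longleftrightarrow> Upair j i \<in> S"
        using False pos[rule_format, of i] by (simp add: Xij A_def)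
      ultimately show ?thesis using \<open>Upair j i \<in> S \<longleftrightarrow> Upair i j \<in> S\<close> by blast
    qed
    thus ?thesis by (simp add: exact_pat_mats_def)
  qed
  have irr: "irreducible_mat X" using ip ex by (simp add: irreducible_pattern_def)
  have stat: "p v* X = p"
  proof -
    have "(\<Sum>i\<in>UNIV. X$i$j * p$i) = p$j" for j
    proof -
      have "(\<Sum>i\<in>UNIV. X$i$j * p$i) = (\<Sum>i\<in>UNIV. p$j * X$j$i)"
        using db by (metis mult.commute)
      also have "\<dots> = p$j * (\<Sum>i\<in>UNIV. X$j$i)" by (simp add: sum_distrib_left)
      also have "(\<Sum>i\<in>UNIV. X$j$i) = 1"
        using rows by (metis (no_types, lifting) matrix_vector_mult_def vec_lambda_beta vec_component mult.right_neutral sum.cong)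
      finally show ?thesis by simp
    qed
    thus ?thesis by (simp add: vector_matrix_mult_def vec_eq_iff mult.commute)
  qed
  have rev: "reversible X"
    unfolding reversible_def
    using st irr harm_unique[OF st irr pos db] by (auto simp: stationary_dist_def)
  show "\<exists>X \<in> pat_mats S. reversible X \<and> stationary_dist X p \<and> (\<forall>i j. p$i * X$i$j = p$j * X$j$i)"
    using inS rev stat pv db by (auto simp: stationary_dist_def)
qed

end
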